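(* Let $p$ be a prime, $s\geq 2$, and let $t_1\geq1,t_2,\dots,t_s$ be nonnegative integers with $t_s\geq 1$; put $N=t_1+\cdots+t_s$. Let $\mathbf{w}_i^{(s)}$ be the $i$th row of $A^{t_1,\dots,t_s}$ (over $\mathbb{Z}_{p^s}$) and $\mathbf{w}_i^{(s+1)}$ the $i$th row of $A^{1,t_1-1,t_2,\dots,t_{s-1},t_s-1}$ (over $\mathbb{Z}_{p^{s+1}}$). Then: (i) $\tilde{\tau}_{s+1}(p^{q}\mathbf{w}_i^{(s+1)})=p^{q}\mathbf{w}_i^{(s)}$ for all $i\in\{2,\dots,N-1\}$ and $q\in\{0,\dots,\sigma_i-1\}$, where $\operatorname{ord}(\mathbf{w}_i^{(s)})=p^{\sigma_i}$; (ii) $\tilde{\tau}_{s+1}(p^{j+1}\mathbf{w}_1^{(s+1)})=p^{j}\mathbf{w}_1^{(s)}$ for all $j\in\{0,\dots,s-1\}$; (iii) $\tilde{\tau}_{s+1}(\mathbf{w}_1^{(s+1)})=\mathbf{w}_N^{(s)}$.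
   Context: For $r\geq1$ and $u\in\mathbb{Z}_{p^r}$ with $p$-ary expansion $u=\sum_{i=0}^{r-1}u_ip^i$, $\phi_r(u)=(u_{r-1},\dots,u_{r-1})+(u_0,\dots,u_{r-2})Y_{r-1}\in\mathbb{Z}_p^{p^{r-1}}$, where $Y_1=(0\ 1\ \cdots\ p-1)$ and $Y_k$ has first $k-1$ rows $(Y_{k-1}\ \cdots\ Y_{k-1})$ ($p$ copies) and last row $(0,\dots,0,1,\dots,1,\dots,p-1,\dots,p-1)$ (blocks of length $p^{k-1}$); $\phi_1=\mathrm{id}$; $\Phi_r$ applies $\phi_r$ coordinatewise and concatenates (it is injective). For $r\geq 2$, $\gamma_r$ is the permutation of $\mathbb{Z}_p^{p^{r-1}}$ given by $\gamma_r(\mathbf{x})_{j+ip+1}=\mathbf{x}_{jp^{r-2}+i+1}$ for $j\in\{0,\dots,p-1\}$, $i\in\{0,\dots,p^{r-2}-1\}$. Define $\tau_r:\mathbb{Z}_{p^r}\to\mathbb{Z}_{p^{r-1}}^p$ by $\tau_r(u)=\Phi_{r-1}^{-1}(\gamma_r^{-1}(\phi_r(u)))$. For $\mathbf{u}=(u_1,\dots,u_n)\in\mathbb{Z}_{p^r}^n$ with $\tau_r(u_i)=(u_{i,1},\dots,u_{i,p})$, set $\tilde{\tau}_r(\mathbf{u})=(u_{1,1},u_{2,1},\dots,u_{n,1},u_{1,2},\dots,u_{n,2},\dots,u_{1,p},\dots,u_{n,p})\in\mathbb{Z}_{p^{r-1}}^{pn}$. For $\mathbb{Z}_{p^r}$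 and $1\le i\le r$ let $T_i=\{jp^{i-1}:0\le j\le p^{r-i+1}-1\}$. The matrix $A^{a_1,\dots,a_r}$ over $\mathbb{Z}_{p^r}$ ($a_1\geq1$) is built recursively: start with $(1)$; appending a row of type $i$ to $A$ replaces $A$ by the matrix with top part $(A\ \cdots\ A)$ ($p^{r-i+1}$ copies) and new last row consisting of constant blocks $0\cdot p^{i-1},1\cdot p^{i-1},\dots,(p^{r-i+1}-1)p^{i-1}$, each block of the length of a row of $A$; one appends $a_1-1$ rows of type 1, then $a_2$ of type 2, ..., then $a_r$ of type $r$. The order $\operatorname{ord}(\mathbf{u})$ of a vector is the least $m\geq1$ with $m\mathbf{u}=\mathbf{0}$. *)

theory Defs
  imports "HOL-Computational_Algebra.Primes"
begin

text \<open>Conventions: elements of Z_(p^r) are natural numbers in [0, p^r); vectors are lists;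
  matrices are lists of rows. All indices in this file are 0-based.\<close>

definition digit :: "nat \<Rightarrow> nat \<Rightarrow> nat \<Rightarrow> nat" where
  "digit p u i = u div p ^ i mod p"

text \<open>The matrix Y_k (k rows, p^k columns): entry in row i, column c (0-based).
  Y_1 = (0 1 ... p-1); Y_(k+1) has first k rows (Y_k ... Y_k) (p copies) and last row
  consisting of the blocks 0..0, 1..1, ..., (p-1)..(p-1) of length p^k.\<close>
fun Ymat :: "nat \<Rightarrow> nat \<Rightarrow> nat \<Rightarrow> nat \<Rightarrow> nat" where
  "Ymat p 0 i c = 0"
| "Ymat p (Suc k) i c =
     (if k = 0 then c
      else if i < k then Ymat p k i (c mod p ^ k) else c div p ^ k)"

definition phi :: "nat \<Rightarrow> nat \<Rightarrow> nat \<Rightarrow> nat list" where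
  "phi p r u = (if r = 1 then [u] else
     map (\<lambda>c. (digit p u (r - 1) + (\<Sum>i<r - 1. digit p u i * Ymat p (r - 1) i c)) mod p)
         [0..<p ^ (r - 1)])"

definition Phi :: "nat \<Rightarrow> nat \<Rightarrow> nat list \<Rightarrow> nat list" where
  "Phi p r us = concat (map (phi p r) us)"

definition gamma :: "nat \<Rightarrow> nat \<Rightarrow> nat list \<Rightarrow> nat list" where
  "gamma p r x = map (\<lambda>k. x ! ((k mod p) * p ^ (r - 2) + k div p)) [0..<p ^ (r - 1)]"

text \<open>tau_r(u) = Phi_(r-1)^(-1)(gamma_r^(-1)(phi_r(u))) in Z_(p^(r-1))^p.\<close>
definition tau :: "nat \<Rightarrow> nat \<Rightarrow> nat \<Rightarrow> nat list" where
  "tau p r u = (THE v. length v = p \<and> (\<forall>x\<in>set v. x < p ^ (r - 1))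
                  \<and> gamma p r (Phi p (r - 1) v) = phi p r u)"

definition tau_tilde :: "nat \<Rightarrow> nat \<Rightarrow> nat list \<Rightarrow> nat list" where
  "tau_tilde p r us = concat (map (\<lambda>k. map (\<lambda>u. tau p r u ! k) us) [0..<p])"

definition vsmult :: "nat \<Rightarrow> nat \<Rightarrow> nat list \<Rightarrow> nat list" where
  "vsmult M a w = map (\<lambda>x. (a * x) mod M) w"

definition vec_ord :: "nat \<Rightarrow> nat list \<Rightarrow> nat" where
  "vec_ord M w = (LEAST m. m \<ge> 1 \<and> (\<forall>x\<in>set w. (m * x) mod M = 0))"

definition append_row :: "nat \<Rightarrow> nat \<Rightarrow> nat \<Rightarrow> nat list list \<Rightarrow> nat list list" where
  "append_row p r i A =
     map (\<lambda>row. concat (replicate (p ^ (r - i + 1)) row)) A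
     @ [concat (map (\<lambda>j. replicate (length (hd A)) (j * p ^ (i - 1))) [0..<p ^ (r - i + 1)])]"

definition row_types :: "nat list \<Rightarrow> nat list" where
  "row_types a = replicate (a ! 0 - 1) 1
     @ concat (map (\<lambda>i. replicate (a ! (i - 1)) i) [2..<length a + 1])"

definition Amat :: "nat \<Rightarrow> nat \<Rightarrow> nat list \<Rightarrow> nat list list" where
  "Amat p r a = fold (append_row p r) (row_types a) [[1]]"

end

theory Submission
  imports Defs
begin


lemma digit_mod:
  assumes "i < n" "p > 0"
  shows "digit p (x mod p ^ n) i = digit p x i"
proof -
  have pn: "p ^ n = p ^ i * p ^ (n - i)" using assms by (simp add: power_add[symmetric])
  have e: "x mod p ^ n = x mod p ^ i + (x div p ^ i mod p ^ (n - i)) * p ^ i"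
    unfolding pn by (simp add: mod_mult2_eq mult.commute)
  have "x mod p ^ n div p ^ i = x div p ^ i mod p ^ (n - i)"
    by (subst e) (use assms in simp)
  moreover have "p dvd p ^ (n - i)" using assms by (simp add: dvd_power)
  ultimately show ?thesis unfolding digit_def by (simp add: mod_mod_cancel)
qed

lemma digit_add_high:
  assumes "i < j" "p > 0"
  shows "digit p (a + b * p ^ j) i = digit p a i"
proof -
  have e: "a + b * p ^ j = a + (b * p ^ (j - i)) * p ^ i"
    using assms by (simp add: power_add[symmetric] mult.assoc)
  have "(a + b * p ^ j) div p ^ i = a div p ^ i + b * p ^ (j - i)"
    unfolding e using assms by simp
  moreover have "b * p ^ (j - i) = (b * p ^ (j - i - 1)) * p"
  proof -
    have "j - i = Suc (j - i - 1)" using assms by simp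
    then show ?thesis by (metis mult.assoc power_Suc2)
  qed
  ultimately show ?thesis unfolding digit_def by simp
qed

lemma digit_add_at:
  assumes "p > 0"
  shows "digit p (a + b * p ^ j) j = (digit p a j + b) mod p"
  using assms unfolding digit_def apply simp by (metis add.commute mod_add_left_eq)

lemma mod_add_lcancel_lt:
  fixes a b c p :: nat
  assumes "(a + b) mod p = (a + c) mod p" "b < p" "c < p"
  shows "b = c"
proof -
  have "(int a + int b) mod int p = (int a + int c) mod int p"
    using assms(1) by (metis of_nat_add of_nat_mod)
  then have "int b mod int p = int c mod int p"
    by (metis add_diff_cancel_left' mod_diff_left_eq)
  then show ?thesis using assms by simp
qed

lemma digit_div: "digit p (u div p) i = digit p u (Suc i)"
  unfolding digit_def by (simp add: div_mult2_eq)

lemma digit_0: "digit p u 0 = u mod p"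
  unfolding digit_def by simp

lemma digit_lt: "p > 0 \<Longrightarrow> digit p u i < p"
  unfolding digit_def by simp

lemma Ymat_digit:
  assumes "1 \<le> k" "i < k" "c < p ^ k" "p > 0"
  shows "Ymat p k i c = digit p c i"
  using assms
proof (induction k arbitrary: i c)
  case 0 then show ?case by simp
next
  case (Suc k)
  show ?case
  proof (cases "k = 0")
    case True
    then show ?thesis using Suc.prems by (simp add: digit_def)
  next
    case False
    show ?thesis
    proof (cases "i < k")
      case True
      then have "Ymat p (Suc k) i c = Ymat p k i (c mod p ^ k)" using False by simp
      also have "\<dots> = digit p (c mod p ^ k) i"
        using Suc.IH[of i "c mod p ^ k"] True False Suc.prems by simp
      also have "\<dots> = digit p c i" using digit_mod True Suc.prems by blast
      finally show ?thesis .
    next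
      case ik: False
      then have ik': "i = k" using Suc.prems by simp
      have "c div p ^ k < p" using Suc.prems
        by (simp add: less_mult_imp_div_less mult.commute)
      then show ?thesis using False ik' unfolding digit_def by simp
    qed
  qed
qed

lemma length_phi: "n \<ge> 1 \<Longrightarrow> length (phi p n x) = p ^ (n - 1)"
  unfolding phi_def by simp

lemma phi_nth:
  assumes "n \<ge> 2" "c < p ^ (n - 1)" "p > 0"
  shows "phi p n x ! c = (digit p x (n - 1) + (\<Sum>i<n - 1. digit p x i * digit p c i)) mod p"
proof -
  have "(\<Sum>i<n - 1. digit p x i * Ymat p (n - 1) i c) = (\<Sum>i<n - 1. digit p x i * digit p c i)"
    by (rule sum.cong) (use assms Ymat_digit in auto)
  then show ?thesis using assms unfolding phi_def by simp
qed

lemma digit_pow: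
  assumes "p \<ge> 2"
  shows "digit p (p ^ i) j = (if j = i then 1 else 0)"
proof (cases "j \<le> i")
  case True
  then have "p ^ i div p ^ j = p ^ (i - j)"
    using assms by (simp add: power_diff)
  then show ?thesis using assms True unfolding digit_def
    by (cases "i - j") auto
next
  case False
  then have "p ^ i < p ^ j" using assms by (simp add: power_strict_increasing)
  then show ?thesis using False unfolding digit_def by simp
qed

lemma digits_eq:
  assumes "\<forall>i<n. digit p x i = digit p y i" "x < p ^ n" "y < p ^ n" "p > 0"
  shows "x = y"
  using assms
proof (induction n arbitrary: x y)
  case 0 then show ?case by simp
next
  case (Suc n)
  have m: "x mod p = y mod p" using Suc.prems(1) by (auto simp: digit_0[symmetric])
  have "x div p = y div p"
  proof (rule Suc.IH)
    show "\<forall>i<n. digit p (x div p) i = digit p (y div p) i"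
      using Suc.prems(1) by (simp add: digit_div)
    show "x div p < p ^ n" using Suc.prems
      by (simp add: less_mult_imp_div_less mult.commute)
    show "y div p < p ^ n" using Suc.prems
      by (simp add: less_mult_imp_div_less mult.commute)
  qed (use Suc.prems in auto)
  then show ?case using m by (metis div_mult_mod_eq)
qed

lemma phi_inj:
  assumes "n \<ge> 2" "p \<ge> 2" "x < p ^ n" "y < p ^ n" "phi p n x = phi p n y"
  shows "x = y"
proof -
  have p0: "p > 0" using assms by simp
  have h0: "digit p x (n - 1) = digit p y (n - 1)"
  proof -
    have e: "phi p n x ! 0 = phi p n y ! 0" using assms by simp
    have "(0::nat) < p ^ (n - 1)" using p0 by simp
    then have "phi p n z ! 0 = digit p z (n - 1)" for z using phi_nth[of n 0 p z] assms p0
      by (simp add: digit_def)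
    then show ?thesis using e by simp
  qed
  have hi: "digit p x i = digit p y i" if "i < n - 1" for i
  proof -
    have lt: "p ^ i < p ^ (n - 1)" using that assms by (simp add: power_strict_increasing)
    have s: "(\<Sum>j<n - 1. digit p z j * digit p (p ^ i) j) = digit p z i" for z
      using that by (simp add: digit_pow[OF assms(2)] if_distrib cong: if_cong)
    have "phi p n x ! (p ^ i) = phi p n y ! (p ^ i)" using assms by simp
    then have "(digit p x (n - 1) + digit p x i) mod p = (digit p x (n - 1) + digit p y i) mod p"
      using phi_nth[OF assms(1) lt p0] s h0 by simp
    then show ?thesis using digit_lt[OF p0] mod_add_lcancel_lt by blast
  qed
  have "\<forall>i<n. digit p x i = digit p y i"
  proof (intro allI impI)
    fix i assume "i < n"
    then consider "i < n - 1" | "i = n - 1" by linarith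
    then show "digit p x i = digit p y i" using hi h0 by cases auto
  qed
  then show ?thesis using digits_eq assms p0 by blast
qed

lemma concat_nth_uniform:
  assumes "\<forall>y\<in>set xs. length y = L" "m < length xs" "c < L"
  shows "concat xs ! (m * L + c) = xs ! m ! c"
  using assms
proof (induction xs arbitrary: m)
  case Nil then show ?case by simp
next
  case (Cons x xs)
  show ?case
  proof (cases m)
    case 0 then show ?thesis using Cons.prems by (simp add: nth_append)
  next
    case (Suc m')
    have "concat (x # xs) ! (m * L + c) = concat xs ! (m' * L + c)"
      using Cons.prems Suc by (simp add: nth_append)
    then show ?thesis using Cons Suc by simp
  qed
qed



lemma pow_split: "n \<ge> 1 \<Longrightarrow> (p::nat) ^ n = p ^ (n - 1) * p"
  by (cases n) auto

lemma gamma_Phi_nth: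
  assumes "n \<ge> 2" "p > 0" "length v = p" "k < p ^ n"
  shows "gamma p (Suc n) (Phi p n v) ! k = phi p n (v ! (k mod p)) ! (k div p)"
proof -
  have kd: "k div p < p ^ (n - 1)"
  proof -
    have "p ^ n = p ^ (n - 1) * p" using assms(1) pow_split by simp
    then show ?thesis using assms(4) by (simp add: less_mult_imp_div_less)
  qed
  have "gamma p (Suc n) (Phi p n v) ! k = Phi p n v ! ((k mod p) * p ^ (n - 1) + k div p)"
    unfolding gamma_def using assms by simp
  also have "\<dots> = map (phi p n) v ! (k mod p) ! (k div p)"
    unfolding Phi_def
    by (rule concat_nth_uniform) (use assms kd length_phi in auto)
  also have "\<dots> = phi p n (v ! (k mod p)) ! (k div p)" using assms by simp
  finally show ?thesis .
qed

lemma tau_unique: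
  assumes "n \<ge> 2" "p \<ge> 2" "length v = p" "length y = p"
    "\<forall>x\<in>set v. x < p ^ n" "\<forall>x\<in>set y. x < p ^ n"
    "gamma p (Suc n) (Phi p n v) = gamma p (Suc n) (Phi p n y)"
  shows "v = y"
proof (rule nth_equalityI)
  show "length v = length y" using assms by simp
  fix m assume m: "m < length v"
  have p0: "p > 0" using assms by simp
  have "phi p n (v ! m) = phi p n (y ! m)"
  proof (rule nth_equalityI)
    show "length (phi p n (v ! m)) = length (phi p n (y ! m))" using assms length_phi by simp
    fix c assume "c < length (phi p n (v ! m))"
    then have c: "c < p ^ (n - 1)" using assms length_phi by simp
    define k where "k = m + p * c"
    have "k < p * (c + 1)" using m assms k_def by simp
    also have "\<dots> \<le> p * p ^ (n - 1)" using c by (intro mult_le_mono2) simp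
    also have "\<dots> = p ^ n" using assms(1) pow_split[of n p] by simp
    finally have kl: "k < p ^ n" .
    have km: "k mod p = m" "k div p = c" using m assms k_def by auto
    show "phi p n (v ! m) ! c = phi p n (y ! m) ! c"
      using gamma_Phi_nth[OF assms(1) p0 assms(3) kl] gamma_Phi_nth[OF assms(1) p0 assms(4) kl] assms(7) km
      by simp
  qed
  then show "v ! m = y ! m"
    using phi_inj[OF assms(1,2)] assms m by (metis nth_mem)
qed

lemma tau_formula:
  assumes "n \<ge> 2" "p \<ge> 2"
  shows "tau p (Suc n) u = map (\<lambda>m. (u div p + m * (u mod p) * p ^ (n - 1)) mod p ^ n) [0..<p]"
proof -
  have p0: "p > 0" using assms by simp
  define v where "v = map (\<lambda>m. (u div p + m * (u mod p) * p ^ (n - 1)) mod p ^ n) [0..<p]"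
  have lv: "length v = p" unfolding v_def by simp
  have bv: "\<forall>x\<in>set v. x < p ^ n" unfolding v_def using p0 by auto
  have gv: "gamma p (Suc n) (Phi p n v) = phi p (Suc n) u"
  proof (rule nth_equalityI)
    show "length (gamma p (Suc n) (Phi p n v)) = length (phi p (Suc n) u)"
      unfolding gamma_def using length_phi[of "Suc n" p u] by simp
    fix k assume "k < length (gamma p (Suc n) (Phi p n v))"
    then have k: "k < p ^ n" unfolding gamma_def by simp
    define m where "m = k mod p"
    define c where "c = k div p"
    have mp: "m < p" unfolding m_def using p0 by simp
    have c: "c < p ^ (n - 1)"
    proof -
      have "p ^ n = p ^ (n - 1) * p" using assms(1) pow_split by simp
      then show ?thesis using k unfolding c_def by (simp add: less_mult_imp_div_less)
    qed
    define B where "B = m * (u mod p)"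
    define vm where "vm = (u div p + B * p ^ (n - 1)) mod p ^ n"
    have vmv: "v ! m = vm" unfolding v_def vm_def B_def using mp by simp
    have d1: "digit p vm i = digit p u (Suc i)" if "i < n - 1" for i
    proof -
      have "digit p vm i = digit p (u div p + B * p ^ (n - 1)) i"
        unfolding vm_def using digit_mod[of i n p] that p0 by simp
      also have "\<dots> = digit p (u div p) i" using digit_add_high[of i "n - 1" p] that p0 by simp
      finally show ?thesis by (simp add: digit_div)
    qed
    have d2: "digit p vm (n - 1) = (digit p u n + B) mod p"
    proof -
      have "digit p vm (n - 1) = digit p (u div p + B * p ^ (n - 1)) (n - 1)"
        unfolding vm_def using digit_mod[of "n - 1" n p] assms p0 by simp
      also have "\<dots> = (digit p (u div p) (n - 1) + B) mod p" using digit_add_at p0 by blast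
      finally show ?thesis using assms(1) by (simp add: digit_div)
    qed
    have "gamma p (Suc n) (Phi p n v) ! k = phi p n vm ! c"
      using gamma_Phi_nth[OF assms(1) p0 lv k] vmv unfolding m_def c_def by simp
    also have "\<dots> = (digit p vm (n - 1) + (\<Sum>i<n - 1. digit p vm i * digit p c i)) mod p"
      using phi_nth[OF assms(1) c p0] by simp
    also have "\<dots> = ((digit p u n + B) mod p + (\<Sum>i<n - 1. digit p u (Suc i) * digit p c i)) mod p"
      using d1 d2 by simp
    also have "\<dots> = (digit p u n + (B + (\<Sum>i<n - 1. digit p u (Suc i) * digit p c i))) mod p"
      by (simp add: mod_add_left_eq ac_simps)
    also have "\<dots> = (digit p u n + (\<Sum>i<n. digit p u i * digit p k i)) mod p"
    proof -
      have "(\<Sum>i<n. digit p u i * digit p k i) = (\<Sum>i<Suc (n - 1). digit p u i * digit p k i)"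
        using assms(1) by simp
      also have "\<dots> = digit p u 0 * digit p k 0 + (\<Sum>i<n - 1. digit p u (Suc i) * digit p k (Suc i))"
        by (rule sum.lessThan_Suc_shift)
      also have "\<dots> = B + (\<Sum>i<n - 1. digit p u (Suc i) * digit p c i)"
        unfolding B_def m_def c_def by (simp add: digit_0 digit_div[symmetric] mult.commute)
      finally show ?thesis by simp
    qed
    also have "\<dots> = phi p (Suc n) u ! k"
      using phi_nth[of "Suc n" k p u] assms k p0 by simp
    finally show "gamma p (Suc n) (Phi p n v) ! k = phi p (Suc n) u ! k" .
  qed
  have "tau p (Suc n) u = v"
    unfolding tau_def
  proof (rule the_equality)
    show "length v = p \<and> (\<forall>x\<in>set v. x < p ^ (Suc n - 1)) \<and> gamma p (Suc n) (Phi p (Suc n - 1) v) = phi p (Suc n) u"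
      using lv bv gv by simp
    fix y assume "length y = p \<and> (\<forall>x\<in>set y. x < p ^ (Suc n - 1)) \<and> gamma p (Suc n) (Phi p (Suc n - 1) y) = phi p (Suc n) u"
    then show "y = v" using tau_unique[OF assms, of y v] lv bv gv by simp
  qed
  then show ?thesis unfolding v_def .
qed



lemma tau_tilde_formula:
  assumes "s \<ge> 2" "p \<ge> 2"
  shows "tau_tilde p (Suc s) us =
    concat (map (\<lambda>m. map (\<lambda>u. (u div p + m * (u mod p) * p ^ (s - 1)) mod p ^ s) us) [0..<p])"
  unfolding tau_tilde_def tau_formula[OF assms]
  by (intro arg_cong[where f = concat] map_cong) auto

lemma tau_tilde_key:
  assumes "s \<ge> 2" "p \<ge> 2"
  shows "tau_tilde p (Suc s) (vsmult (p ^ Suc s) (p ^ q) (map ((*) p) w))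
       = concat (replicate p (vsmult (p ^ s) (p ^ q) w))"
proof -
  have p0: "p > 0" using assms by simp
  have e: "(p ^ q * (p * x)) mod p ^ Suc s = p * ((p ^ q * x) mod p ^ s)" for x
    by (metis mult.left_commute mult_mod_right power_Suc)
  have f: "((p * y) div p + m * ((p * y) mod p) * p ^ (s - 1)) mod p ^ s = y mod p ^ s" for y m
    using p0 by simp
  have "tau_tilde p (Suc s) (vsmult (p ^ Suc s) (p ^ q) (map ((*) p) w))
      = concat (map (\<lambda>m. vsmult (p ^ s) (p ^ q) w) [0..<p])"
  proof -
    have g: "(\<lambda>x. ((p ^ q * (p * x)) mod p ^ Suc s div p + m * ((p ^ q * (p * x)) mod p ^ Suc s mod p) * p ^ (s - 1)) mod p ^ s)
           = (\<lambda>x. (p ^ q * x) mod p ^ s)" for m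
    proof
      fix x
      show "((p ^ q * (p * x)) mod p ^ Suc s div p + m * ((p ^ q * (p * x)) mod p ^ Suc s mod p) * p ^ (s - 1)) mod p ^ s
           = (p ^ q * x) mod p ^ s"
        unfolding e f by simp
    qed
    show ?thesis
      unfolding tau_tilde_formula[OF assms] vsmult_def map_map comp_def g ..
  qed
  also have "\<dots> = concat (replicate p (vsmult (p ^ s) (p ^ q) w))"
    by (simp add: map_replicate_const)
  finally show ?thesis .
qed

lemma vsmult_concat_replicate:
  "vsmult M a (concat (replicate k w)) = concat (replicate k (vsmult M a w))"
  unfolding vsmult_def by (simp add: map_concat)

lemma vsmult_shift: "vsmult M (p ^ (j + 1)) w = vsmult M (p ^ j) (map ((*) p) w)"
  unfolding vsmult_def by (simp add: ac_simps)

lemma append_row_step: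
  assumes "x \<ge> 1" "A \<noteq> []"
  shows "append_row p (Suc s) (Suc x) (hd A # map (map ((*) p)) (tl A))
       = hd (append_row p s x A) # map (map ((*) p)) (tl (append_row p s x A))"
proof -
  obtain a as where A: "A = a # as" using assms by (cases A) auto
  obtain x' where x: "x = Suc x'" using assms by (cases x) auto
  show ?thesis unfolding A x append_row_def
    by (simp add: map_concat comp_def mult.left_commute)
qed

lemma fold_rel:
  assumes "\<forall>x\<in>set xs. x \<ge> 1" "A \<noteq> []"
  shows "fold (append_row p (Suc s)) (map Suc xs) (hd A # map (map ((*) p)) (tl A))
       = hd (fold (append_row p s) xs A) # map (map ((*) p)) (tl (fold (append_row p s) xs A))"
  using assms
proof (induction xs arbitrary: A)
  case Nil then show ?case by simp
next
  case (Cons x xs)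
  have ne: "append_row p s x A \<noteq> []" unfolding append_row_def by simp
  show ?case
    using Cons.IH[of "append_row p s x A"] Cons.prems ne append_row_step[of x A p s] by simp
qed

lemma length_fold: "length (fold (append_row p r) xs A) = length A + length xs"
  by (induction xs arbitrary: A) (auto simp: append_row_def)

lemma hd_fold_ones:
  assumes "A \<noteq> []" "\<forall>x\<in>set (hd A). x = 1"
  shows "fold (append_row p r) xs A \<noteq> [] \<and> (\<forall>x\<in>set (hd (fold (append_row p r) xs A)). x = 1)"
  using assms
proof (induction xs arbitrary: A)
  case Nil then show ?case by simp
next
  case (Cons x xs)
  obtain a as where A: "A = a # as" using Cons.prems by (cases A) auto
  show ?case using Cons.IH[of "append_row p r x A"] Cons.prems unfolding A
    by (auto simp: append_row_def)
qed


definition xs0 :: "nat \<Rightarrow> nat list \<Rightarrow> nat list" where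
  "xs0 s t = replicate (t ! 0 - 1) 1 @ concat (map (\<lambda>i. replicate (t ! (i - 1)) i) [2..<s])
      @ replicate (t ! (s - 1) - 1) s"

lemma row_types_W:
  assumes "s \<ge> 2" "length t = s" "t ! (s - 1) \<ge> 1"
  shows "row_types t = xs0 s t @ [s]"
proof -
  have u: "[2..<length t + 1] = [2..<s] @ [s]" using assms by (simp add: upt_Suc_append)
  obtain k where k: "t ! (s - 1) = Suc k" using assms(3) by (cases "t ! (s - 1)") auto
  have r: "replicate (t ! (s - 1)) s = replicate (t ! (s - 1) - 1) s @ [s]"
    unfolding k by (simp add: replicate_append_same)
  have "row_types t = replicate (t ! 0 - 1) 1 @ concat (map (\<lambda>i. replicate (t ! (i - 1)) i) [2..<s])
      @ replicate (t ! (s - 1)) s"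
    unfolding row_types_def u by simp
  then show ?thesis unfolding xs0_def r by simp
qed
lemma row_types_V:
  assumes "s \<ge> 2" "length t = s"
  shows "row_types ([1, t ! 0 - 1] @ take (s - 2) (drop 1 t) @ [t ! (s - 1) - 1]) = map Suc (xs0 s t)"
proof -
  define a where "a = [1, t ! 0 - 1] @ take (s - 2) (drop 1 t) @ [t ! (s - 1) - 1]"
  have la: "length a = Suc s" unfolding a_def using assms by simp
  have u: "[2..<length a + 1] = 2 # map Suc [2..<s] @ [Suc s]"
  proof -
    have "[2..<length a + 1] = [2..<Suc s] @ [Suc s]" using la assms by (simp add: upt_Suc_append)
    also have "[2..<Suc s] = 2 # [3..<Suc s]" using assms by (simp add: upt_conv_Cons)
    also have "[3..<Suc s] = map Suc [2..<s]" by (simp add: map_Suc_upt)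
    finally show ?thesis by simp
  qed
  have a0: "a ! 0 = 1" "a ! 1 = t ! 0 - 1" unfolding a_def by simp_all
  have as: "a ! s = t ! (s - 1) - 1" unfolding a_def using assms by (simp add: nth_append)
  have ai: "a ! i = t ! (i - 1)" if "2 \<le> i" "i < s" for i
  proof -
    have "a ! i = take (s - 2) (drop 1 t) ! (i - 2)" unfolding a_def using that assms
      by (simp add: nth_append numeral_2_eq_2)
    also have "\<dots> = t ! (i - 1)" using that assms by (simp add: Suc_diff_Suc numeral_2_eq_2)
    finally show ?thesis .
  qed
  have m: "concat (map (\<lambda>i. replicate (a ! (i - 1)) i) (map Suc [2..<s]))
         = concat (map (\<lambda>i. replicate (t ! (i - 1)) (Suc i)) [2..<s])"
    apply (simp add: comp_def)
    apply (rule arg_cong[where f = concat])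
    by (rule map_cong) (auto simp: ai)
  show ?thesis unfolding a_def[symmetric] row_types_def u
    using m a0 as by (simp add: xs0_def map_concat comp_def)
qed

lemma xs0_ge1: "s \<ge> 1 \<Longrightarrow> \<forall>x\<in>set (xs0 s t). x \<ge> 1"
  unfolding xs0_def by auto

lemma length_xs0:
  assumes "s \<ge> 2" "length t = s" "t ! 0 \<ge> 1" "t ! (s - 1) \<ge> 1"
  shows "length (xs0 s t) + 2 = sum_list t"
proof -
  obtain s' where s: "s = Suc (Suc s')" using assms by (metis add_2_eq_Suc le_Suc_ex)
  have l1: "length (concat (map (\<lambda>i. replicate (t ! (i - 1)) i) [2..<s])) = (\<Sum>i=2..<s. t ! (i - 1))"
    by (simp add: length_concat comp_def sum_set_upt_conv_sum_list_nat[symmetric])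
  have l2: "(\<Sum>i=2..<s. t ! (i - 1)) = (\<Sum>i=1..<Suc s'. t ! i)"
  proof -
    have "(\<Sum>i=2..<s. t ! (i - 1)) = (\<Sum>i=1+1..<Suc s'+1. t ! (i - 1))" unfolding s one_add_one by (simp only: Suc_eq_plus1)
    also have "\<dots> = (\<Sum>i=1..<Suc s'. t ! (i + 1 - 1))" by (rule sum.shift_bounds_nat_ivl)
    finally show ?thesis by simp
  qed
  have l3: "sum_list t = (\<Sum>i=0..<Suc (Suc s'). t ! i)"
    using assms s by (simp add: sum_list_sum_nth)
  have l4: "(\<Sum>i=0..<Suc (Suc s'). t ! i) = t ! 0 + (\<Sum>i=1..<Suc s'. t ! i) + t ! Suc s'"
    by (simp add: sum.atLeast_Suc_lessThan)
  show ?thesis unfolding xs0_def using l1 l2 l3 l4 assms s by simp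
qed


theorem proposition2:
  fixes p s :: nat and t :: "nat list"
  assumes "prime p" and "s \<ge> 2" and "length t = s"
    and "t ! 0 \<ge> 1" and "t ! (s - 1) \<ge> 1"
  defines "N \<equiv> sum_list t"
    and "W \<equiv> Amat p s t"
    and "V \<equiv> Amat p (Suc s) ([1, t ! 0 - 1] @ take (s - 2) (drop 1 t) @ [t ! (s - 1) - 1])"
  shows "(\<forall>i\<in>{2..N - 1}. \<forall>\<sigma>. vec_ord (p ^ s) (W ! (i - 1)) = p ^ \<sigma> \<longrightarrow>
            (\<forall>q<\<sigma>. tau_tilde p (Suc s) (vsmult (p ^ Suc s) (p ^ q) (V ! (i - 1)))
                    = vsmult (p ^ s) (p ^ q) (W ! (i - 1))))
       \<and> (\<forall>j<s. tau_tilde p (Suc s) (vsmult (p ^ Suc s) (p ^ (j + 1)) (V ! 0))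
                  = vsmult (p ^ s) (p ^ j) (W ! 0))
       \<and> tau_tilde p (Suc s) (V ! 0) = W ! (N - 1)"
proof -
  have p2: "p \<ge> 2" using assms(1) by (simp add: prime_ge_2_nat)
  define W' where "W' = fold (append_row p s) (xs0 s t) [[1]]"
  have Weq: "W = append_row p s s W'"
    unfolding W_def Amat_def W'_def row_types_W[OF assms(2,3,5)] by simp
  have Veq: "V = hd W' # map (map ((*) p)) (tl W')"
  proof -
    have "V = fold (append_row p (Suc s)) (map Suc (xs0 s t)) (hd [[1]] # map (map ((*) p)) (tl [[1::nat]]))"
      unfolding V_def Amat_def row_types_V[OF assms(2,3)] by simp
    also have "\<dots> = hd W' # map (map ((*) p)) (tl W')"
      unfolding W'_def by (rule fold_rel) (use xs0_ge1[of s t] assms(2) in auto)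
    finally show ?thesis .
  qed
  have lenW': "length W' = N - 1"
    unfolding W'_def length_fold N_def using length_xs0[OF assms(2-5)] by simp
  have ones: "W' \<noteq> [] \<and> (\<forall>x\<in>set (hd W'). x = 1)"
    unfolding W'_def by (rule hd_fold_ones) auto
  have Wk: "W ! k = concat (replicate p (W' ! k))" if "k < length W'" for k
    unfolding Weq append_row_def using that by (simp add: nth_append)
  have WN: "W ! (N - 1) = concat (map (\<lambda>j. replicate (length (hd W')) (j * p ^ (s - 1))) [0..<p])"
    unfolding Weq append_row_def using lenW' by (simp add: nth_append)
  have Vk: "V ! k = map ((*) p) (W' ! k)" if k1: "1 \<le> k" and k2: "k < length W'" for k
  proof -
    obtain k' where k: "k = Suc k'" using k1 by (cases k) auto
    show ?thesis unfolding Veq k using k2 k by (simp add: nth_tl)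
  qed
  have V0: "V ! 0 = W' ! 0" unfolding Veq using ones by (simp add: hd_conv_nth)
  have part1: "tau_tilde p (Suc s) (vsmult (p ^ Suc s) (p ^ q) (V ! (i - 1)))
                    = vsmult (p ^ s) (p ^ q) (W ! (i - 1))" if "i \<in> {2..N - 1}" for i q
  proof -
    have k: "1 \<le> i - 1" "i - 1 < length W'" using that lenW' by auto
    show ?thesis unfolding Vk[OF k] Wk[OF k(2)] tau_tilde_key[OF assms(2) p2]
      vsmult_concat_replicate ..
  qed
  have part2: "tau_tilde p (Suc s) (vsmult (p ^ Suc s) (p ^ (j + 1)) (V ! 0))
                  = vsmult (p ^ s) (p ^ j) (W ! 0)" for j
  proof -
    have "0 < length W'" using ones by simp
    then have w0: "W ! 0 = concat (replicate p (W' ! 0))" by (rule Wk)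
    show ?thesis unfolding V0 w0 vsmult_shift tau_tilde_key[OF assms(2) p2]
      vsmult_concat_replicate ..
  qed
  have part3: "tau_tilde p (Suc s) (V ! 0) = W ! (N - 1)"
  proof -
    define L where "L = length (hd W')"
    have h: "V ! 0 = replicate L 1" unfolding Veq L_def using ones
      by (simp add: replicate_length_same)
    have "tau_tilde p (Suc s) (V ! 0) =
        concat (map (\<lambda>m. replicate L ((m * p ^ (s - 1)) mod p ^ s)) [0..<p])"
      unfolding tau_tilde_formula[OF assms(2) p2] h using p2 by simp
    also have "\<dots> = concat (map (\<lambda>m. replicate L (m * p ^ (s - 1))) [0..<p])"
    proof (rule arg_cong[where f = concat], rule map_cong)
      fix m assume "m \<in> set [0..<p]"
      then have "m < p" by simp
      then have "m * p ^ (s - 1) < p * p ^ (s - 1)" using p2 by simp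
      also have "\<dots> = p ^ s" using assms(2) pow_split[of s p] by simp
      finally show "replicate L ((m * p ^ (s - 1)) mod p ^ s) = replicate L (m * p ^ (s - 1))" by simp
    qed simp
    finally show ?thesis unfolding WN L_def .
  qed
  show ?thesis using part1 part2 part3 by blast
qed


end
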